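(* Let $\Delta$ be an isosceles triangle with side lengths $(2,2,1)$, and let $\rho_\diamond=\rho(\tfrac12,\sqrt3)$. Then $\Delta$ can be domed if and only if $\rho_\diamond$ can be domed.
   Context: Closed polygons with integer side lengths are regarded as closed polygons with unit edges by subdividing each side of length $k$ into $k$ collinear unit segments (so $\Delta$ has $5$ unit edges). A unit rhombus $\rho(a,b)$ is a closed polygon $[v_1v_2v_3v_4]$ in $\mathbb{R}^3$ with four sides of length $1$ and $|v_1v_3|=a$, $|v_2v_4|=b$. A closed polygon with unit edges can be domed if there is a finite connected 2-dimensional simplicial complex which is a compact surface with a single boundary cycle, with a map to $\mathbb{R}^3$ linear on simplices sending each triangle to a unit equilateral triangle and the boundary cycle onto the polygon vertex by vertex in cyclic order. *)

theory Defs
  imports "HOL-Analysis.Analysis"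
begin

text \<open>A finite 2-dimensional simplicial complex is given by its set of triangles
  (3-element vertex sets; vertices are natural numbers, which is no loss of generality
  for a finite complex). Every vertex and edge lies in a triangle (purity).\<close>

definition cx_vertices :: "nat set set \<Rightarrow> nat set" where
  "cx_vertices T = \<Union>T"

definition cx_edges :: "nat set set \<Rightarrow> nat set set" where
  "cx_edges T = {e. card e = 2 \<and> (\<exists>t\<in>T. e \<subseteq> t)}"

definition cx_boundary_edges :: "nat set set \<Rightarrow> nat set set" where
  "cx_boundary_edges T = {e \<in> cx_edges T. card {t \<in> T. e \<subseteq> t} = 1}"

definition link_vertices :: "nat set set \<Rightarrow> nat \<Rightarrow> nat set" where
  "link_vertices T v = \<Union>{t - {v} | t. t \<in> T \<and> v \<in> t}"

definition link_adj :: "nat set set \<Rightarrow> nat \<Rightarrow> (nat \<times> nat) set" where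
  "link_adj T v = {(x, y). {v, x, y} \<in> T \<and> x \<noteq> y \<and> x \<noteq> v \<and> y \<noteq> v}"

definition cx_adj :: "nat set set \<Rightarrow> (nat \<times> nat) set" where
  "cx_adj T = {(x, y). \<exists>t\<in>T. x \<in> t \<and> y \<in> t}"

text \<open>A finite connected 2-dimensional simplicial complex which is a compact surface
  (with boundary): every edge lies in one or two triangles and every vertex link is
  connected (hence a path or a cycle), so each vertex has a disc or half-disc
  neighbourhood.\<close>

definition surface_complex :: "nat set set \<Rightarrow> bool" where
  "surface_complex T \<longleftrightarrow>
     finite T \<and> T \<noteq> {} \<and> (\<forall>t\<in>T. card t = 3) \<and>
     (\<forall>x\<in>cx_vertices T. \<forall>y\<in>cx_vertices T. (x, y) \<in> (cx_adj T)\<^sup>*) \<and>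
     (\<forall>e\<in>cx_edges T. card {t \<in> T. e \<subseteq> t} \<le> 2) \<and>
     (\<forall>v\<in>cx_vertices T. \<forall>x\<in>link_vertices T v. \<forall>y\<in>link_vertices T v.
        (x, y) \<in> (link_adj T v)\<^sup>*)"

definition boundary_cycle :: "nat set set \<Rightarrow> nat \<Rightarrow> (nat \<Rightarrow> nat) \<Rightarrow> bool" where
  "boundary_cycle T n b \<longleftrightarrow> 3 \<le> n \<and> inj_on b {..<n} \<and>
     cx_boundary_edges T = {{b i, b (Suc i mod n)} | i. i < n}"

text \<open>A closed polygon with unit edges, given by its cyclic list of vertices P!0, ..., P!(n-1),
  can be domed: there is such a surface complex T, a map f of its vertices to R^3 sending each
  triangle to a unit equilateral triangle (linear extension on simplices is implicit), and the
  boundary cycle is mapped onto the polygon vertex by vertex in cyclic order.\<close>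

definition can_be_domed :: "(real^3) list \<Rightarrow> bool" where
  "can_be_domed P \<longleftrightarrow>
     (\<exists>T f b. surface_complex T \<and> boundary_cycle T (length P) b \<and>
        (\<forall>t\<in>T. \<forall>x\<in>t. \<forall>y\<in>t. x \<noteq> y \<longrightarrow> dist (f x) (f y) = 1) \<and>
        (\<forall>i < length P. f (b i) = P ! i))"

text \<open>Triangle [A B C] with side lengths (2,2,1), subdivided into 5 unit edges.\<close>

definition tri_221_polygon :: "real^3 \<Rightarrow> real^3 \<Rightarrow> real^3 \<Rightarrow> (real^3) list" where
  "tri_221_polygon A B C = [A, midpoint A B, B, midpoint B C, C]"

definition is_unit_rhombus :: "real \<Rightarrow> real \<Rightarrow> real^3 \<Rightarrow> real^3 \<Rightarrow> real^3 \<Rightarrow> real^3 \<Rightarrow> bool" where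
  "is_unit_rhombus a b v1 v2 v3 v4 \<longleftrightarrow>
     dist v1 v2 = 1 \<and> dist v2 v3 = 1 \<and> dist v3 v4 = 1 \<and> dist v4 v1 = 1 \<and>
     dist v1 v3 = a \<and> dist v2 v4 = b"

end

theory Submission
  imports Defs
begin


definition hh :: "real^3 \<Rightarrow> real^3 \<Rightarrow> real^3" where
  "hh v x = (if v = 0 then x else x - (2 * (v \<bullet> x) / (v \<bullet> v)) *\<^sub>R v)"

lemma hh_linear: "linear (hh v)"
  by (rule linearI) (auto simp: hh_def inner_add_right inner_scaleR_right algebra_simps add_divide_distrib)

lemma hh_inner: "hh v x \<bullet> hh v y = x \<bullet> y"
proof (cases "v = 0")
  case False
  then have "v \<bullet> v \<noteq> 0" by simp
  then show ?thesis
    by (simp add: hh_def inner_diff_left inner_diff_right inner_commute field_simps power2_eq_square)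
qed (simp add: hh_def)

lemma hh_map: assumes "norm p = norm q" shows "hh (p - q) p = q"
proof (cases "p = q")
  case False
  have n: "p \<bullet> p = q \<bullet> q" using assms by (metis norm_eq_sqrt_inner real_sqrt_eq_iff)
  have vv: "(p - q) \<bullet> (p - q) = 2 * ((p - q) \<bullet> p)"
    using n by (simp add: inner_diff_left inner_diff_right inner_commute)
  have "(p - q) \<bullet> (p - q) \<noteq> 0" using False by simp
  then show ?thesis using False vv by (simp add: hh_def)
qed (simp add: hh_def)

lemma hh_fix: assumes "r \<bullet> p = r \<bullet> q" shows "hh (p - q) r = r"
  using assms by (simp add: hh_def inner_diff_left inner_diff_right inner_commute)

lemma cong3:
  fixes P0 P1 P2 Q0 Q1 Q2 :: "real^3"
  assumes "dist P0 P1 = dist Q0 Q1" "dist P0 P2 = dist Q0 Q2" "dist P1 P2 = dist Q1 Q2"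
  obtains g where "\<And>x y. dist (g x) (g y) = dist x y" "g P0 = Q0" "g P1 = Q1" "g P2 = Q2"
    "\<And>x y. g (midpoint x y) = midpoint (g x) (g y)"
proof -
  define a where "a = P1 - P0"
  define c where "c = P2 - P0"
  define a' where "a' = Q1 - Q0"
  define c' where "c' = Q2 - Q0"
  have na: "norm a = norm a'" using assms(1) by (simp add: a_def a'_def dist_norm norm_minus_commute)
  have nc: "norm c = norm c'" using assms(2) by (simp add: c_def c'_def dist_norm norm_minus_commute)
  have nac: "norm (a - c) = norm (a' - c')" using assms(3)
    by (simp add: a_def a'_def c_def c'_def dist_norm norm_minus_commute)
  have ip: "a \<bullet> c = a' \<bullet> c'"
  proof -
    have "(a - c) \<bullet> (a - c) = (a' - c') \<bullet> (a' - c')" using nac by (metis power2_norm_eq_inner)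
    moreover have "a \<bullet> a = a' \<bullet> a'" "c \<bullet> c = c' \<bullet> c'" using na nc by (metis power2_norm_eq_inner)+
    ultimately show ?thesis by (simp add: inner_diff_left inner_diff_right inner_commute)
  qed
  define H1 where "H1 = hh (a - a')"
  define c1 where "c1 = H1 c"
  define H2 where "H2 = hh (c1 - c')"
  define L where "L = H2 \<circ> H1"
  have linL: "linear L" unfolding L_def H1_def H2_def using hh_linear linear_compose by blast
  have innL: "L x \<bullet> L y = x \<bullet> y" for x y by (simp add: L_def H1_def H2_def hh_inner)
  have H1a: "H1 a = a'" using na by (simp add: H1_def hh_map)
  have nc1: "norm c1 = norm c'" using nc by (simp add: c1_def H1_def norm_eq_sqrt_inner hh_inner)
  have "a' \<bullet> c1 = a' \<bullet> c'" using ip H1a by (metis c1_def H1_def hh_inner)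
  then have H2a: "H2 a' = a'" by (simp add: H2_def hh_fix)
  have La: "L a = a'" by (simp add: L_def H1a H2a)
  have Lc: "L c = c'" by (simp add: L_def H2_def c1_def[symmetric] hh_map nc1)
  define g where "g x = L (x - P0) + Q0" for x
  show ?thesis
  proof
    show "dist (g x) (g y) = dist x y" for x y
    proof -
      have "g x - g y = L (x - y)" by (simp add: g_def linear_diff[OF linL])
      then show ?thesis by (simp add: dist_norm norm_eq_sqrt_inner innL)
    qed
    show "g P0 = Q0" by (simp add: g_def linear_0[OF linL])
    show "g P1 = Q1" using La by (simp add: g_def a_def a'_def)
    show "g P2 = Q2" using Lc by (simp add: g_def c_def c'_def)
    show "g (midpoint x y) = midpoint (g x) (g y)" for x y
    proof -
      have "midpoint x y - P0 = (1/2) *\<^sub>R ((x - P0) + (y - P0))"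
        by (simp add: midpoint_def vec_eq_iff algebra_simps)
      then have "g (midpoint x y) = (1/2) *\<^sub>R (L (x - P0) + L (y - P0)) + Q0"
        unfolding g_def by (simp only: linear_add[OF linL] linear_scale[OF linL])
      also have "\<dots> = midpoint (g x) (g y)"
        by (simp add: g_def midpoint_def scaleR_add_right)
      finally show ?thesis .
    qed
  qed
qed



definition valid :: "nat set set \<Rightarrow> (nat \<Rightarrow> real^3) \<Rightarrow> bool" where
  "valid T f \<longleftrightarrow> (\<forall>t\<in>T. \<forall>x\<in>t. \<forall>y\<in>t. x \<noteq> y \<longrightarrow> dist (f x) (f y) = 1)"

lemma count_insert:
  assumes "finite T" "t \<notin> T"
  shows "card {s \<in> insert t T. e \<subseteq> s} = card {s \<in> T. e \<subseteq> s} + (if e \<subseteq> t then 1 else 0)"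
proof (cases "e \<subseteq> t")
  case True
  then have "{s \<in> insert t T. e \<subseteq> s} = insert t {s \<in> T. e \<subseteq> s}" by auto
  then show ?thesis using assms True by simp
next
  case False
  then have "{s \<in> insert t T. e \<subseteq> s} = {s \<in> T. e \<subseteq> s}" by auto
  then show ?thesis using False by simp
qed

lemma edges_insert: "cx_edges (insert t T) = cx_edges T \<union> {e. card e = 2 \<and> e \<subseteq> t}"
  unfolding cx_edges_def by auto

lemma tri_edges:
  assumes "card e = 2" "e \<subseteq> {u, w, z}"
  shows "e = {u, w} \<or> e = {u, z} \<or> e = {w, z}"
proof -
  obtain a b where e: "e = {a, b}" "a \<noteq> b" using assms(1) by (meson card_2_iff)
  then show ?thesis using assms(2) by auto
qed

lemma count_pos_edge:
  assumes "finite T" "card e = 2" "card {s \<in> T. e \<subseteq> s} \<noteq> 0"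
  shows "e \<in> cx_edges T"
proof -
  have "{s \<in> T. e \<subseteq> s} \<noteq> {}"
  proof
    assume "{s \<in> T. e \<subseteq> s} = {}"
    then have "card {s \<in> T. e \<subseteq> s} = 0" by (simp only: card.empty)
    with assms(3) show False by simp
  qed
  then obtain s where "s \<in> T" "e \<subseteq> s" by blast
  then show ?thesis using assms(2) unfolding cx_edges_def by auto
qed

lemma count_fresh:
  assumes "z \<in> e" "z \<notin> \<Union>T"
  shows "card {s \<in> T. e \<subseteq> s} = 0"
proof -
  have "{s \<in> T. e \<subseteq> s} = {}" using assms by auto
  then show ?thesis by (simp only: card.empty)
qed

lemma edge_link:
  assumes "{a, b} \<in> cx_edges T" "a \<noteq> b"
  shows "b \<in> link_vertices T a" "a \<in> \<Union>T"
  using assms unfolding cx_edges_def link_vertices_def by auto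

lemma edge_dist:
  assumes "valid T f" "{a, b} \<in> cx_edges T" "a \<noteq> b"
  shows "dist (f a) (f b) = 1"
  using assms unfolding cx_edges_def valid_def by auto

lemma bd_edges: "cx_boundary_edges T \<subseteq> cx_edges T"
  unfolding cx_boundary_edges_def by auto

lemma conn_extend:
  assumes "\<forall>x\<in>L. \<forall>y\<in>L. (x, y) \<in> R\<^sup>*" "R \<subseteq> R'"
    "\<forall>x\<in>S. \<forall>y\<in>S. (x, y) \<in> R'\<^sup>*" "L = {} \<or> S \<inter> L \<noteq> {}"
  shows "\<forall>x\<in>L \<union> S. \<forall>y\<in>L \<union> S. (x, y) \<in> R'\<^sup>*"
proof (cases "L = {}")
  case True then show ?thesis using assms(3) by simp
next
  case False
  then obtain r where r: "r \<in> S" "r \<in> L" using assms(4) by blast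
  have mono: "R\<^sup>* \<subseteq> R'\<^sup>*" using assms(2) by (rule rtrancl_mono)
  have to: "(x, r) \<in> R'\<^sup>* \<and> (r, x) \<in> R'\<^sup>*" if "x \<in> L \<union> S" for x
    using that r assms(1,3) mono by blast
  show ?thesis by (meson to rtrancl_trans)
qed

lemma link_vertices_insert:
  "link_vertices (insert t T) v = link_vertices T v \<union> (if v \<in> t then t - {v} else {})"
  unfolding link_vertices_def by auto

lemma link_adj_mono: "link_adj T v \<subseteq> link_adj (insert t T) v"
  unfolding link_adj_def by auto

lemma surface_insert:
  assumes S: "surface_complex T" and t3: "card t = 3" and tT: "t \<notin> T"
    and H2: "\<forall>e. card e = 2 \<and> e \<subseteq> t \<longrightarrow> card {s \<in> T. e \<subseteq> s} \<le> 1"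
    and H3: "t \<inter> \<Union>T \<noteq> {}"
    and H4: "\<forall>v\<in>t. v \<in> \<Union>T \<longrightarrow> (t - {v}) \<inter> link_vertices T v \<noteq> {}"
  shows "surface_complex (insert t T)"
proof -
  have fin: "finite T" using S unfolding surface_complex_def by simp
  have conn: "\<forall>x\<in>cx_vertices (insert t T). \<forall>y\<in>cx_vertices (insert t T). (x, y) \<in> (cx_adj (insert t T))\<^sup>*"
  proof -
    have "cx_vertices (insert t T) = cx_vertices T \<union> t" unfolding cx_vertices_def by auto
    moreover have "\<forall>x\<in>cx_vertices T \<union> t. \<forall>y\<in>cx_vertices T \<union> t. (x, y) \<in> (cx_adj (insert t T))\<^sup>*"
    proof (rule conn_extend)
      show "\<forall>x\<in>cx_vertices T. \<forall>y\<in>cx_vertices T. (x, y) \<in> (cx_adj T)\<^sup>*"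
        using S unfolding surface_complex_def by blast
      show "cx_adj T \<subseteq> cx_adj (insert t T)" unfolding cx_adj_def by auto
      show "\<forall>x\<in>t. \<forall>y\<in>t. (x, y) \<in> (cx_adj (insert t T))\<^sup>*"
        unfolding cx_adj_def by auto
      show "cx_vertices T = {} \<or> t \<inter> cx_vertices T \<noteq> {}" using H3 unfolding cx_vertices_def by auto
    qed
    ultimately show ?thesis by simp
  qed
  have cnt: "\<forall>e\<in>cx_edges (insert t T). card {s \<in> insert t T. e \<subseteq> s} \<le> 2"
  proof
    fix e assume e: "e \<in> cx_edges (insert t T)"
    show "card {s \<in> insert t T. e \<subseteq> s} \<le> 2"
    proof (cases "e \<subseteq> t")
      case True
      then have "card e = 2" using e unfolding cx_edges_def by auto
      then show ?thesis using H2 True count_insert[OF fin tT, of e] by auto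
    next
      case False
      then have "e \<in> cx_edges T" using e edges_insert by auto
      then show ?thesis using S False count_insert[OF fin tT, of e] unfolding surface_complex_def by auto
    qed
  qed
  have lnk: "\<forall>v\<in>cx_vertices (insert t T). \<forall>x\<in>link_vertices (insert t T) v. \<forall>y\<in>link_vertices (insert t T) v.
        (x, y) \<in> (link_adj (insert t T) v)\<^sup>*"
  proof (intro ballI)
    fix v x y assume v: "v \<in> cx_vertices (insert t T)" and x: "x \<in> link_vertices (insert t T) v"
      and y: "y \<in> link_vertices (insert t T) v"
    show "(x, y) \<in> (link_adj (insert t T) v)\<^sup>*"
    proof (cases "v \<in> t")
      case False
      then have "link_vertices (insert t T) v = link_vertices T v" by (simp add: link_vertices_insert)
      moreover have "link_adj (insert t T) v = link_adj T v" using False unfolding link_adj_def by auto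
      moreover have "v \<in> cx_vertices T" using v False unfolding cx_vertices_def by auto
      ultimately show ?thesis using x y S unfolding surface_complex_def by auto
    next
      case True
      have "card (t - {v}) = 2" using True t3 by simp
      then obtain a c where ac: "t - {v} = {a, c}" "a \<noteq> c" by (meson card_2_iff)
      then have tv: "t = {v, a, c}" "a \<noteq> v" "c \<noteq> v" using True by auto
      have L: "link_vertices (insert t T) v = link_vertices T v \<union> {a, c}"
        using True ac by (simp add: link_vertices_insert)
      have old: "\<forall>x\<in>link_vertices T v. \<forall>y\<in>link_vertices T v. (x, y) \<in> (link_adj T v)\<^sup>*"
      proof (cases "v \<in> cx_vertices T")
        case True then show ?thesis using S unfolding surface_complex_def by auto
      next
        case False then have "link_vertices T v = {}" unfolding link_vertices_def cx_vertices_def by auto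
        then show ?thesis by simp
      qed
      have "\<forall>x\<in>link_vertices T v \<union> {a, c}. \<forall>y\<in>link_vertices T v \<union> {a, c}. (x, y) \<in> (link_adj (insert t T) v)\<^sup>*"
      proof (rule conn_extend[OF old link_adj_mono])
        have "(a, c) \<in> link_adj (insert t T) v" "(c, a) \<in> link_adj (insert t T) v"
          using tv ac unfolding link_adj_def by (auto simp: insert_commute)
        then show "\<forall>x\<in>{a, c}. \<forall>y\<in>{a, c}. (x, y) \<in> (link_adj (insert t T) v)\<^sup>*" by auto
        show "link_vertices T v = {} \<or> {a, c} \<inter> link_vertices T v \<noteq> {}"
        proof (cases "v \<in> \<Union>T")
          case True then show ?thesis using H4 \<open>v \<in> t\<close> ac by auto
        next
          case False then show ?thesis unfolding link_vertices_def by auto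
        qed
      qed
      then show ?thesis using x y L by auto
    qed
  qed
  show ?thesis
    using S t3 conn cnt lnk unfolding surface_complex_def by auto
qed

lemma bd_iff: "e \<in> cx_boundary_edges T \<longleftrightarrow> e \<in> cx_edges T \<and> card {s \<in> T. e \<subseteq> s} = 1"
  unfolding cx_boundary_edges_def by auto

lemma edge_card: "e \<in> cx_edges T \<Longrightarrow> card e = 2"
  unfolding cx_edges_def by auto

lemma bd_insert_gen:
  assumes fin: "finite T" and tT: "t \<notin> T"
    and nt: "\<not> (card e = 2 \<and> e \<subseteq> t)"
  shows "e \<in> cx_boundary_edges (insert t T) \<longleftrightarrow> e \<in> cx_boundary_edges T"
proof (cases "card e = 2")
  case False
  then show ?thesis using edge_card bd_edges by blast
next
  case True
  then have "\<not> e \<subseteq> t" using nt by simp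
  then show ?thesis using count_insert[OF fin tT, of e] edges_insert[of t T] unfolding bd_iff by auto
qed

lemma ear:
  assumes S: "surface_complex T" and V: "valid T f" and B: "{u, w} \<in> cx_boundary_edges T"
    and uw: "u \<noteq> w" and z: "z \<notin> \<Union>T"
    and d1: "dist (f u) P = 1" and d2: "dist (f w) P = 1"
  shows "surface_complex (insert {u, w, z} T)" "valid (insert {u, w, z} T) (f(z := P))"
    "cx_boundary_edges (insert {u, w, z} T) = (cx_boundary_edges T - {{u, w}}) \<union> {{u, z}, {w, z}}"
    "\<Union>(insert {u, w, z} T) = {u, w, z} \<union> \<Union>T"
proof -
  have fin: "finite T" using S unfolding surface_complex_def by simp
  have E: "{u, w} \<in> cx_edges T" using B bd_edges by blast
  have uT: "u \<in> \<Union>T" and wT: "w \<in> \<Union>T" using edge_link[OF E uw] edge_link[of w u T] E uw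
    by (auto simp: insert_commute)
  have zu: "z \<noteq> u" "z \<noteq> w" using z uT wT by auto
  have tT: "{u, w, z} \<notin> T" using z by auto
  have c3: "card {u, w, z} = 3" using uw zu by auto
  have cuw: "card {s \<in> T. {u, w} \<subseteq> s} = 1" using B unfolding bd_iff by simp
  have cuz: "card {s \<in> T. {u, z} \<subseteq> s} = 0" "card {s \<in> T. {w, z} \<subseteq> s} = 0"
    by (rule count_fresh[OF _ z], simp)+
  show "surface_complex (insert {u, w, z} T)"
  proof (rule surface_insert[OF S c3 tT])
    show "\<forall>e. card e = 2 \<and> e \<subseteq> {u, w, z} \<longrightarrow> card {s \<in> T. e \<subseteq> s} \<le> 1"
    proof (intro allI impI)
      fix e assume "card e = 2 \<and> e \<subseteq> {u, w, z}"
      then have "e = {u, w} \<or> e = {u, z} \<or> e = {w, z}" using tri_edges[of e u w z] by blast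
      then show "card {s \<in> T. e \<subseteq> s} \<le> 1" using cuw cuz by (elim disjE) simp_all
    qed
    show "{u, w, z} \<inter> \<Union>T \<noteq> {}" using uT by blast
    have "w \<in> link_vertices T u" "u \<in> link_vertices T w"
      using edge_link E uw by (auto simp: insert_commute)
    then show "\<forall>v\<in>{u, w, z}. v \<in> \<Union>T \<longrightarrow> ({u, w, z} - {v}) \<inter> link_vertices T v \<noteq> {}"
      using z uw zu by blast
  qed
  have duw: "dist (f u) (f w) = 1" using edge_dist[OF V E uw] .
  show "valid (insert {u, w, z} T) (f(z := P))"
    unfolding valid_def
  proof (intro ballI impI)
    fix t x y assume t: "t \<in> insert {u, w, z} T" and x: "x \<in> t" and y: "y \<in> t" and xy: "x \<noteq> y"
    show "dist ((f(z := P)) x) ((f(z := P)) y) = 1"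
    proof (cases "t \<in> T")
      case True
      then have "x \<noteq> z" "y \<noteq> z" using x y z by auto
      then show ?thesis using V True x y xy unfolding valid_def by auto
    next
      case False
      then have "t = {u, w, z}" using t by auto
      then show ?thesis using x y xy zu d1 d2 duw by (auto simp: dist_commute)
    qed
  qed
  show "cx_boundary_edges (insert {u, w, z} T) = (cx_boundary_edges T - {{u, w}}) \<union> {{u, z}, {w, z}}"
  proof (rule set_eqI)
    fix e
    show "e \<in> cx_boundary_edges (insert {u, w, z} T) \<longleftrightarrow> e \<in> (cx_boundary_edges T - {{u, w}}) \<union> {{u, z}, {w, z}}"
    proof (cases "card e = 2 \<and> e \<subseteq> {u, w, z}")
      case True
      then have "e = {u, w} \<or> e = {u, z} \<or> e = {w, z}" using tri_edges[of e u w z] by blast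
      moreover have "{u, w} \<notin> cx_boundary_edges (insert {u, w, z} T)"
        using count_insert[OF fin tT, of "{u, w}"] cuw unfolding bd_iff by auto
      moreover have "{u, z} \<in> cx_boundary_edges (insert {u, w, z} T)"
        using count_insert[OF fin tT, of "{u, z}"] cuz zu unfolding bd_iff edges_insert by auto
      moreover have "{w, z} \<in> cx_boundary_edges (insert {u, w, z} T)"
        using count_insert[OF fin tT, of "{w, z}"] cuz zu unfolding bd_iff edges_insert by auto
      ultimately show ?thesis using zu uw by (auto simp: doubleton_eq_iff)
    next
      case False
      then have "e \<noteq> {u, w}" "e \<noteq> {u, z}" "e \<noteq> {w, z}" using uw zu by auto
      then show ?thesis using bd_insert_gen[OF fin tT False] by auto
    qed
  qed
  show "\<Union>(insert {u, w, z} T) = {u, w, z} \<union> \<Union>T" by auto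
qed

lemma close:
  assumes S: "surface_complex T" and V: "valid T f"
    and B1: "{u, w} \<in> cx_boundary_edges T" and B2: "{w, z} \<in> cx_boundary_edges T"
    and uw: "u \<noteq> w" and wz: "w \<noteq> z" and uz: "u \<noteq> z"
    and NE: "{u, z} \<notin> cx_edges T"
    and d: "dist (f u) (f z) = 1"
  shows "surface_complex (insert {u, w, z} T)" "valid (insert {u, w, z} T) f"
    "cx_boundary_edges (insert {u, w, z} T) = (cx_boundary_edges T - {{u, w}, {w, z}}) \<union> {{u, z}}"
    "\<Union>(insert {u, w, z} T) = {u, w, z} \<union> \<Union>T"
proof -
  have fin: "finite T" using S unfolding surface_complex_def by simp
  have E1: "{u, w} \<in> cx_edges T" using B1 bd_edges by blast
  have E2: "{w, z} \<in> cx_edges T" using B2 bd_edges by blast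
  have E2': "{z, w} \<in> cx_edges T" using E2 by (simp add: insert_commute)
  have E1': "{w, u} \<in> cx_edges T" using E1 by (simp add: insert_commute)
  have uT: "u \<in> \<Union>T" using edge_link(2)[OF E1 uw] .
  have tT: "{u, w, z} \<notin> T"
  proof
    assume "{u, w, z} \<in> T"
    then have "{u, z} \<in> cx_edges T" using uz unfolding cx_edges_def by auto
    then show False using NE by simp
  qed
  have c3: "card {u, w, z} = 3" using uw wz uz by auto
  have cuw: "card {s \<in> T. {u, w} \<subseteq> s} = 1" using B1 unfolding bd_iff by simp
  have cwz: "card {s \<in> T. {w, z} \<subseteq> s} = 1" using B2 unfolding bd_iff by simp
  have cuz: "card {s \<in> T. {u, z} \<subseteq> s} = 0"
  proof (rule ccontr)
    assume "card {s \<in> T. {u, z} \<subseteq> s} \<noteq> 0"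
    moreover have "card {u, z} = 2" using uz by simp
    ultimately have "{u, z} \<in> cx_edges T" using count_pos_edge[OF fin, of "{u, z}"] by blast
    then show False using NE by simp
  qed
  show "surface_complex (insert {u, w, z} T)"
  proof (rule surface_insert[OF S c3 tT])
    show "\<forall>e. card e = 2 \<and> e \<subseteq> {u, w, z} \<longrightarrow> card {s \<in> T. e \<subseteq> s} \<le> 1"
    proof (intro allI impI)
      fix e assume "card e = 2 \<and> e \<subseteq> {u, w, z}"
      then have "e = {u, w} \<or> e = {u, z} \<or> e = {w, z}" using tri_edges[of e u w z] by blast
      then show "card {s \<in> T. e \<subseteq> s} \<le> 1" using cuw cuz cwz by (elim disjE) simp_all
    qed
    show "{u, w, z} \<inter> \<Union>T \<noteq> {}" using uT by blast
    have "w \<in> link_vertices T u" "u \<in> link_vertices T w" "w \<in> link_vertices T z"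
      using edge_link(1)[OF E1 uw] edge_link(1)[OF E1' uw[symmetric]] edge_link(1)[OF E2' wz[symmetric]] .
    then show "\<forall>v\<in>{u, w, z}. v \<in> \<Union>T \<longrightarrow> ({u, w, z} - {v}) \<inter> link_vertices T v \<noteq> {}"
      using uw wz uz by blast
  qed
  have duw: "dist (f u) (f w) = 1" using edge_dist[OF V E1 uw] .
  have dwz: "dist (f w) (f z) = 1" using edge_dist[OF V E2 wz] .
  show "valid (insert {u, w, z} T) f"
    unfolding valid_def
  proof (intro ballI impI)
    fix t x y assume t: "t \<in> insert {u, w, z} T" and x: "x \<in> t" and y: "y \<in> t" and xy: "x \<noteq> y"
    show "dist (f x) (f y) = 1"
    proof (cases "t \<in> T")
      case True
      then show ?thesis using V True x y xy unfolding valid_def by auto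
    next
      case False
      then have "t = {u, w, z}" using t by auto
      then show ?thesis using x y xy d duw dwz by (auto simp: dist_commute)
    qed
  qed
  show "cx_boundary_edges (insert {u, w, z} T) = (cx_boundary_edges T - {{u, w}, {w, z}}) \<union> {{u, z}}"
  proof (rule set_eqI)
    fix e
    show "e \<in> cx_boundary_edges (insert {u, w, z} T) \<longleftrightarrow> e \<in> (cx_boundary_edges T - {{u, w}, {w, z}}) \<union> {{u, z}}"
    proof (cases "card e = 2 \<and> e \<subseteq> {u, w, z}")
      case True
      then have "e = {u, w} \<or> e = {u, z} \<or> e = {w, z}" using tri_edges[of e u w z] by blast
      moreover have "{u, w} \<notin> cx_boundary_edges (insert {u, w, z} T)"
        using count_insert[OF fin tT, of "{u, w}"] cuw unfolding bd_iff by auto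
      moreover have "{w, z} \<notin> cx_boundary_edges (insert {u, w, z} T)"
        using count_insert[OF fin tT, of "{w, z}"] cwz unfolding bd_iff by auto
      moreover have "{u, z} \<in> cx_boundary_edges (insert {u, w, z} T)"
        using count_insert[OF fin tT, of "{u, z}"] cuz uz unfolding bd_iff edges_insert by auto
      ultimately show ?thesis using uz uw wz by (auto simp: doubleton_eq_iff)
    next
      case False
      then have "e \<noteq> {u, w}" "e \<noteq> {u, z}" "e \<noteq> {w, z}" using uw uz wz by auto
      then show ?thesis using bd_insert_gen[OF fin tT False] by auto
    qed
  qed
  show "\<Union>(insert {u, w, z} T) = {u, w, z} \<union> \<Union>T" by auto
qed


lemma setimg: "{g i | i. i < (n::nat)} = g ` {..<n}" by auto
lemma lt4: "{..<(4::nat)} = {0,1,2,3}" by (auto simp: numeral_eq_Suc less_Suc_eq)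
lemma lt5: "{..<(5::nat)} = {0,1,2,3,4}" by (auto simp: numeral_eq_Suc less_Suc_eq)

lemma mods: "Suc 0 mod 4 = 1" "Suc 1 mod 4 = (2::nat)" "Suc 2 mod 4 = (3::nat)" "Suc 3 mod 4 = (0::nat)"
  "Suc 0 mod 5 = 1" "Suc 1 mod 5 = (2::nat)" "Suc 2 mod 5 = (3::nat)" "Suc 3 mod 5 = (4::nat)" "Suc 4 mod 5 = (0::nat)"
  by simp_all
lemma cyc4: "{{b i, b (Suc i mod 4)} | i. i < (4::nat)} = {{b 0, b 1}, {b 1, b 2}, {b 2, b 3}, {b 3, b 0}}"
  by (simp only: setimg lt4 image_insert image_empty mods)
lemma cyc5: "{{b i, b (Suc i mod 5)} | i. i < (5::nat)} = {{b 0, b 1}, {b 1, b 2}, {b 2, b 3}, {b 3, b 4}, {b 4, b 0}}"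
  by (simp only: setimg lt5 image_insert image_empty mods)

lemma cbd4_E:
  assumes "can_be_domed [p0, p1, p2, p3]"
  shows "\<exists>T f b0 b1 b2 b3. surface_complex T \<and> valid T f \<and> distinct [b0, b1, b2, b3] \<and>
    cx_boundary_edges T = {{b0, b1}, {b1, b2}, {b2, b3}, {b3, b0}} \<and>
    f b0 = p0 \<and> f b1 = p1 \<and> f b2 = p2 \<and> f b3 = p3"
proof -
  have l: "length [p0, p1, p2, p3] = 4" by simp
  obtain T f b where S: "surface_complex T" and B: "boundary_cycle T 4 b"
    and V: "\<forall>t\<in>T. \<forall>x\<in>t. \<forall>y\<in>t. x \<noteq> y \<longrightarrow> dist (f x) (f y) = 1"
    and F: "\<forall>i<4. f (b i) = [p0, p1, p2, p3] ! i"
    using assms unfolding can_be_domed_def l by blast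
  have inj: "inj_on b {0,1,2,3}" using B unfolding boundary_cycle_def lt4 by simp
  have bd: "cx_boundary_edges T = {{b 0, b 1}, {b 1, b 2}, {b 2, b 3}, {b 3, b 0}}"
    using B unfolding boundary_cycle_def cyc4 by blast
  have d: "distinct [b 0, b 1, b 2, b 3]" using inj unfolding inj_on_def by auto
  have "f (b 0) = p0" "f (b 1) = p1" "f (b 2) = p2" "f (b 3) = p3"
    using F by (simp_all add: numeral_eq_Suc)
  moreover have "valid T f" using V unfolding valid_def .
  ultimately show ?thesis using S d bd
    by (intro exI[of _ T] exI[of _ f] exI[of _ "b 0"] exI[of _ "b 1"] exI[of _ "b 2"] exI[of _ "b 3"]) simp
qed
lemma cbd4_I:
  assumes "surface_complex T" "valid T f" "distinct [b0, b1, b2, b3]"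
    "cx_boundary_edges T = {{b0, b1}, {b1, b2}, {b2, b3}, {b3, b0}}"
    "f b0 = p0" "f b1 = p1" "f b2 = p2" "f b3 = p3"
  shows "can_be_domed [p0, p1, p2, p3]"
proof -
  define b where "b i = [b0, b1, b2, b3] ! i" for i
  have l: "length [p0, p1, p2, p3] = 4" by simp
  have bv: "b 0 = b0" "b 1 = b1" "b 2 = b2" "b 3 = b3" by (simp_all add: b_def numeral_eq_Suc)
  have "inj_on b {..<4}" unfolding lt4 using assms(3) by (simp add: b_def numeral_eq_Suc)
  moreover have "cx_boundary_edges T = {{b i, b (Suc i mod 4)} | i. i < 4}"
    unfolding cyc4 using assms(4) by (simp only: bv)
  ultimately have B: "boundary_cycle T 4 b" unfolding boundary_cycle_def by simp
  have F: "\<forall>i<4. f (b i) = [p0, p1, p2, p3] ! i"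
    unfolding lt4[unfolded lessThan_def, simplified] using assms(5-8)
    by (auto simp: b_def numeral_eq_Suc less_Suc_eq)
  show ?thesis unfolding can_be_domed_def l using assms(1,2) B F unfolding valid_def by blast
qed

lemma cbd5_E:
  assumes "can_be_domed [p0, p1, p2, p3, p4]"
  shows "\<exists>T f b0 b1 b2 b3 b4. surface_complex T \<and> valid T f \<and> distinct [b0, b1, b2, b3, b4] \<and>
    cx_boundary_edges T = {{b0, b1}, {b1, b2}, {b2, b3}, {b3, b4}, {b4, b0}} \<and>
    f b0 = p0 \<and> f b1 = p1 \<and> f b2 = p2 \<and> f b3 = p3 \<and> f b4 = p4"
proof -
  have l: "length [p0, p1, p2, p3, p4] = 5" by simp
  obtain T f b where S: "surface_complex T" and B: "boundary_cycle T 5 b"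
    and V: "\<forall>t\<in>T. \<forall>x\<in>t. \<forall>y\<in>t. x \<noteq> y \<longrightarrow> dist (f x) (f y) = 1"
    and F: "\<forall>i<5. f (b i) = [p0, p1, p2, p3, p4] ! i"
    using assms unfolding can_be_domed_def l by blast
  have inj: "inj_on b {0,1,2,3,4}" using B unfolding boundary_cycle_def lt5 by simp
  have bd: "cx_boundary_edges T = {{b 0, b 1}, {b 1, b 2}, {b 2, b 3}, {b 3, b 4}, {b 4, b 0}}"
    using B unfolding boundary_cycle_def cyc5 by blast
  have d: "distinct [b 0, b 1, b 2, b 3, b 4]" using inj unfolding inj_on_def by auto
  have "f (b 0) = p0" "f (b 1) = p1" "f (b 2) = p2" "f (b 3) = p3" "f (b 4) = p4"
    using F by (simp_all add: numeral_eq_Suc)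
  moreover have "valid T f" using V unfolding valid_def .
  ultimately show ?thesis using S d bd
    by (intro exI[of _ T] exI[of _ f] exI[of _ "b 0"] exI[of _ "b 1"] exI[of _ "b 2"] exI[of _ "b 3"] exI[of _ "b 4"]) simp
qed

lemma cbd5_I:
  assumes "surface_complex T" "valid T f" "distinct [b0, b1, b2, b3, b4]"
    "cx_boundary_edges T = {{b0, b1}, {b1, b2}, {b2, b3}, {b3, b4}, {b4, b0}}"
    "f b0 = p0" "f b1 = p1" "f b2 = p2" "f b3 = p3" "f b4 = p4"
  shows "can_be_domed [p0, p1, p2, p3, p4]"
proof -
  define b where "b i = [b0, b1, b2, b3, b4] ! i" for i
  have l: "length [p0, p1, p2, p3, p4] = 5" by simp
  have bv: "b 0 = b0" "b 1 = b1" "b 2 = b2" "b 3 = b3" "b 4 = b4" by (simp_all add: b_def numeral_eq_Suc)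
  have "inj_on b {..<5}" unfolding lt5 using assms(3) by (simp add: b_def numeral_eq_Suc)
  moreover have "cx_boundary_edges T = {{b i, b (Suc i mod 5)} | i. i < 5}"
    unfolding cyc5 using assms(4) by (simp only: bv)
  ultimately have B: "boundary_cycle T 5 b" unfolding boundary_cycle_def by simp
  have F: "\<forall>i<5. f (b i) = [p0, p1, p2, p3, p4] ! i"
    using assms(5-9) by (auto simp: b_def numeral_eq_Suc less_Suc_eq)
  show ?thesis unfolding can_be_domed_def l using assms(1,2) B F unfolding valid_def by blast
qed


lemma fin_verts: "surface_complex T \<Longrightarrow> finite (\<Union>T)"
proof -
  assume "surface_complex T"
  then have "finite T" "\<forall>t\<in>T. card t = 3" unfolding surface_complex_def by auto
  moreover have "card t = 3 \<Longrightarrow> finite t" for t :: "nat set" by (rule card_ge_0_finite) simp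
  ultimately show ?thesis by blast
qed

lemma fresh: "surface_complex T \<Longrightarrow> \<exists>z. z \<notin> \<Union>T"
  using fin_verts ex_new_if_finite[OF infinite_UNIV_nat] by blast

lemma bd_vert: "{a, b} \<in> cx_boundary_edges T \<Longrightarrow> a \<in> \<Union>T \<and> b \<in> \<Union>T"
  unfolding cx_boundary_edges_def cx_edges_def by auto

lemma L1:
  assumes D: "can_be_domed [v1, v2, v3, v4]"
    and d1: "dist v4 A' = 1" and d2: "dist v1 A' = 1" and d3: "dist v4 C' = 1"
    and d4: "dist A' C' = 1" and d5: "dist v3 C' = 1"
  shows "can_be_domed [A', v1, v2, v3, C']"
proof -
  obtain T f b0 b1 b2 b3 where S: "surface_complex T" and V: "valid T f"
    and dst: "distinct [b0, b1, b2, b3]"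
    and B: "cx_boundary_edges T = {{b0, b1}, {b1, b2}, {b2, b3}, {b3, b0}}"
    and F: "f b0 = v1" "f b1 = v2" "f b2 = v3" "f b3 = v4"
    using cbd4_E[OF D] by blast
  have inT: "b0 \<in> \<Union>T" "b1 \<in> \<Union>T" "b2 \<in> \<Union>T" "b3 \<in> \<Union>T"
    using bd_vert[of b0 b1 T] bd_vert[of b2 b3 T] B by auto
  obtain p where p: "p \<notin> \<Union>T" using fresh[OF S] by blast
  have pne: "p \<noteq> b0" "p \<noteq> b1" "p \<noteq> b2" "p \<noteq> b3" using p inT by auto
  define T1 where "T1 = insert {b3, b0, p} T"
  define f1 where "f1 = f(p := A')"
  have m1: "{b3, b0} \<in> cx_boundary_edges T" using B by simp
  have n1: "b3 \<noteq> b0" using dst by simp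
  have e1: "surface_complex T1" "valid T1 f1"
    "cx_boundary_edges T1 = (cx_boundary_edges T - {{b3, b0}}) \<union> {{b3, p}, {b0, p}}"
    "\<Union>T1 = {b3, b0, p} \<union> \<Union>T"
    unfolding T1_def f1_def
    using ear[OF S V m1 n1 p, of A'] F d1 d2 by simp_all
  have B1: "cx_boundary_edges T1 = {{b3, p}, {b0, p}, {b0, b1}, {b1, b2}, {b2, b3}}"
    using e1(3) B dst by (simp add: doubleton_eq_iff insert_Diff_if)
  obtain q where q: "q \<notin> \<Union>T1" using fresh[OF e1(1)] by blast
  have qne: "q \<noteq> b0" "q \<noteq> b1" "q \<noteq> b2" "q \<noteq> b3" "q \<noteq> p" using q inT e1(4) by auto
  define T2 where "T2 = insert {b3, p, q} T1"
  define f2 where "f2 = f1(q := C')"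
  have f1v: "f1 b3 = v4" "f1 p = A'" using F pne by (auto simp: f1_def)
  have m2: "{b3, p} \<in> cx_boundary_edges T1" using B1 by simp
  have n2: "b3 \<noteq> p" using pne by simp
  have e2: "surface_complex T2" "valid T2 f2"
    "cx_boundary_edges T2 = (cx_boundary_edges T1 - {{b3, p}}) \<union> {{b3, q}, {p, q}}"
    "\<Union>T2 = {b3, p, q} \<union> \<Union>T1"
    unfolding T2_def f2_def
    using ear[OF e1(1) e1(2) m2 n2 q, of C'] f1v d3 d4 by simp_all
  have B2: "cx_boundary_edges T2 = {{b3, q}, {p, q}, {b0, p}, {b0, b1}, {b1, b2}, {b2, b3}}"
    using e2(3) B1 dst pne by (simp add: doubleton_eq_iff insert_Diff_if)
  have f2v: "f2 b0 = v1" "f2 b1 = v2" "f2 b2 = v3" "f2 b3 = v4" "f2 p = A'" "f2 q = C'"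
    using F pne qne by (auto simp: f1_def f2_def)
  have ne: "{b2, q} \<notin> cx_edges T2"
  proof
    assume "{b2, q} \<in> cx_edges T2"
    then obtain t where t: "t \<in> T2" "{b2, q} \<subseteq> t" unfolding cx_edges_def by blast
    show False
    proof (cases "t \<in> T")
      case True then show ?thesis using t q e1(4) by auto
    next
      case False
      then have "t = {b3, p, q} \<or> t = {b3, b0, p}" using t(1) unfolding T2_def T1_def by auto
      then show ?thesis using t(2) dst pne qne by auto
    qed
  qed
  define T3 where "T3 = insert {b2, b3, q} T2"
  have m3: "{b2, b3} \<in> cx_boundary_edges T2" "{b3, q} \<in> cx_boundary_edges T2" using B2 by simp_all
  have n3: "b2 \<noteq> b3" "b3 \<noteq> q" "b2 \<noteq> q" using dst qne by auto
  have d5': "dist (f2 b2) (f2 q) = 1" using f2v d5 by simp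
  have e3: "surface_complex T3" "valid T3 f2"
    "cx_boundary_edges T3 = (cx_boundary_edges T2 - {{b2, b3}, {b3, q}}) \<union> {{b2, q}}"
    unfolding T3_def
    using close[OF e2(1) e2(2) m3 n3 ne d5'] by simp_all
  have fb0: "cx_boundary_edges T3 = {{b2, q}, {p, q}, {b0, p}, {b0, b1}, {b1, b2}}"
    using e3(3) B2 dst pne qne by (simp add: doubleton_eq_iff insert_Diff_if)
  have fb: "cx_boundary_edges T3 = {{p, b0}, {b0, b1}, {b1, b2}, {b2, q}, {q, p}}"
    unfolding fb0 by (auto simp: insert_commute)
  have dd: "distinct [p, b0, b1, b2, q]" using dst pne qne by auto
  show ?thesis
    by (rule cbd5_I[OF e3(1) e3(2) dd fb]) (simp_all add: f2v)
qed


lemma L2: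
  assumes D: "can_be_domed [A', v1, v2, v3, C']"
    and d1: "dist C' v4 = 1" and d2: "dist A' v4 = 1" and d3: "dist v4 v1 = 1" and d4: "dist v3 v4 = 1"
  shows "can_be_domed [v1, v2, v3, v4]"
proof -
  obtain T f b0 b1 b2 b3 b4 where S: "surface_complex T" and V: "valid T f"
    and dst: "distinct [b0, b1, b2, b3, b4]"
    and B: "cx_boundary_edges T = {{b0, b1}, {b1, b2}, {b2, b3}, {b3, b4}, {b4, b0}}"
    and F: "f b0 = A'" "f b1 = v1" "f b2 = v2" "f b3 = v3" "f b4 = C'"
    using cbd5_E[OF D] by blast
  have inT: "b0 \<in> \<Union>T" "b1 \<in> \<Union>T" "b2 \<in> \<Union>T" "b3 \<in> \<Union>T" "b4 \<in> \<Union>T"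
    using bd_vert[of b0 b1 T] bd_vert[of b2 b3 T] bd_vert[of b4 b0 T] B by auto
  obtain x where x: "x \<notin> \<Union>T" using fresh[OF S] by blast
  have xne: "x \<noteq> b0" "x \<noteq> b1" "x \<noteq> b2" "x \<noteq> b3" "x \<noteq> b4" using x inT by auto
  have ds: "b0 \<noteq> b1" "b0 \<noteq> b2" "b0 \<noteq> b3" "b0 \<noteq> b4" "b0 \<noteq> x" "b1 \<noteq> b0" "b1 \<noteq> b2" "b1 \<noteq> b3" "b1 \<noteq> b4" "b1 \<noteq> x" "b2 \<noteq> b0" "b2 \<noteq> b1" "b2 \<noteq> b3" "b2 \<noteq> b4" "b2 \<noteq> x" "b3 \<noteq> b0" "b3 \<noteq> b1" "b3 \<noteq> b2" "b3 \<noteq> b4" "b3 \<noteq> x" "b4 \<noteq> b0" "b4 \<noteq> b1" "b4 \<noteq> b2" "b4 \<noteq> b3" "b4 \<noteq> x" "x \<noteq> b0" "x \<noteq> b1" "x \<noteq> b2" "x \<noteq> b3" "x \<noteq> b4" using dst xne by auto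
  define T1 where "T1 = insert {b4, b0, x} T"
  define f1 where "f1 = f(x := v4)"
  have m1: "{b4, b0} \<in> cx_boundary_edges T" using B by simp
  have n1: "b4 \<noteq> b0" using dst by auto
  have e1: "surface_complex T1" "valid T1 f1"
    "cx_boundary_edges T1 = (cx_boundary_edges T - {{b4, b0}}) \<union> {{b4, x}, {b0, x}}"
    "\<Union>T1 = {b4, b0, x} \<union> \<Union>T"
    unfolding T1_def f1_def
    using ear[OF S V m1 n1 x, of v4] F d1 d2 by simp_all
  have B1: "cx_boundary_edges T1 = {{b4, x}, {b0, x}, {b0, b1}, {b1, b2}, {b2, b3}, {b3, b4}}"
    using e1(3) B ds by (simp add: doubleton_eq_iff insert_Diff_if)
  have f1v: "f1 b1 = v1" "f1 b2 = v2" "f1 b3 = v3" "f1 x = v4"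
    using F xne by (auto simp: f1_def)
  have ne1: "{x, b1} \<notin> cx_edges T1"
  proof
    assume "{x, b1} \<in> cx_edges T1"
    then obtain t where t: "t \<in> T1" "{x, b1} \<subseteq> t" unfolding cx_edges_def by blast
    show False
    proof (cases "t \<in> T")
      case True then show ?thesis using t x by auto
    next
      case False
      then have "t = {b4, b0, x}" using t(1) unfolding T1_def by auto
      then show ?thesis using t(2) ds by auto
    qed
  qed
  have xb0: "{x, b0} = {b0, x}" by (rule insert_commute)
  have m2: "{x, b0} \<in> cx_boundary_edges T1" "{b0, b1} \<in> cx_boundary_edges T1"
    unfolding xb0 using B1 by simp_all
  have n2: "x \<noteq> b0" "b0 \<noteq> b1" "x \<noteq> b1" using dst xne by auto
  have d3': "dist (f1 x) (f1 b1) = 1" using f1v d3 by simp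
  define T2 where "T2 = insert {x, b0, b1} T1"
  have e2: "surface_complex T2" "valid T2 f1"
    "cx_boundary_edges T2 = (cx_boundary_edges T1 - {{x, b0}, {b0, b1}}) \<union> {{x, b1}}"
    unfolding T2_def
    using close[OF e1(1) e1(2) m2 n2 ne1 d3'] by simp_all
  have B2: "cx_boundary_edges T2 = {{x, b1}, {b4, x}, {b1, b2}, {b2, b3}, {b3, b4}}"
    using e2(3) B1 ds by (simp add: doubleton_eq_iff insert_Diff_if)
  have ne2: "{b3, x} \<notin> cx_edges T2"
  proof
    assume "{b3, x} \<in> cx_edges T2"
    then obtain t where t: "t \<in> T2" "{b3, x} \<subseteq> t" unfolding cx_edges_def by blast
    show False
    proof (cases "t \<in> T")
      case True then show ?thesis using t x by auto
    next
      case False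
      then have "t = {b4, b0, x} \<or> t = {x, b0, b1}" using t(1) unfolding T2_def T1_def by auto
      then show ?thesis using t(2) ds by auto
    qed
  qed
  have m3: "{b3, b4} \<in> cx_boundary_edges T2" "{b4, x} \<in> cx_boundary_edges T2" using B2 by simp_all
  have n3: "b3 \<noteq> b4" "b4 \<noteq> x" "b3 \<noteq> x" using dst xne by auto
  have d4': "dist (f1 b3) (f1 x) = 1" using f1v d4 by simp
  define T3 where "T3 = insert {b3, b4, x} T2"
  have e3: "surface_complex T3" "valid T3 f1"
    "cx_boundary_edges T3 = (cx_boundary_edges T2 - {{b3, b4}, {b4, x}}) \<union> {{b3, x}}"
    unfolding T3_def
    using close[OF e2(1) e2(2) m3 n3 ne2 d4'] by simp_all
  have fb0: "cx_boundary_edges T3 = {{b3, x}, {x, b1}, {b1, b2}, {b2, b3}}"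
    using e3(3) B2 ds by (simp add: doubleton_eq_iff insert_Diff_if)
  have fb: "cx_boundary_edges T3 = {{b1, b2}, {b2, b3}, {b3, x}, {x, b1}}"
    unfolding fb0 by (auto simp: insert_commute)
  have dd: "distinct [b1, b2, b3, x]" using dst xne by auto
  show ?thesis
    by (rule cbd4_I[OF e3(1) e3(2) dd fb]) (simp_all add: f1v)
qed


lemma transfer:
  assumes "can_be_domed P" "\<And>x y. dist (g x) (g y) = dist x y"
  shows "can_be_domed (map g P)"
proof -
  obtain T f b where "surface_complex T" "boundary_cycle T (length P) b"
    "\<forall>t\<in>T. \<forall>x\<in>t. \<forall>y\<in>t. x \<noteq> y \<longrightarrow> dist (f x) (f y) = 1"
    "\<forall>i < length P. f (b i) = P ! i"
    using assms(1) unfolding can_be_domed_def by blast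
  then show ?thesis unfolding can_be_domed_def
    by (intro exI[of _ T] exI[of _ "g \<circ> f"] exI[of _ b]) (simp add: assms(2))
qed

lemma dist1_iff: "dist (x::real^3) y = r \<longleftrightarrow> (x - y) \<bullet> (x - y) = r\<^sup>2 \<and> r \<ge> 0"
  by (metis dist_norm norm_ge_zero power2_norm_eq_inner real_sqrt_abs real_sqrt_unique
      abs_of_nonneg norm_eq_sqrt_inner)

lemma rhombus_facts:
  fixes v1 v2 v3 v4 :: "real^3"
  assumes "is_unit_rhombus (1/2) (sqrt 3) v1 v2 v3 v4"
  defines "A' \<equiv> 2 *\<^sub>R v1 - v2" and "C' \<equiv> 2 *\<^sub>R v3 - v2"
  shows "dist v4 A' = 1" "dist v1 A' = 1" "dist v4 C' = 1" "dist A' C' = 1" "dist v3 C' = 1"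
    "dist v4 v1 = 1" "dist v3 v4 = 1"
    "dist A' v2 = 2" "dist v2 C' = 2"
    "midpoint A' v2 = v1" "midpoint v2 C' = v3"
proof -
  define a where "a = v1 - v2"
  define c where "c = v3 - v2"
  define d where "d = v4 - v2"
  have r: "dist v1 v2 = 1" "dist v2 v3 = 1" "dist v3 v4 = 1" "dist v4 v1 = 1"
    "dist v1 v3 = 1/2" "dist v2 v4 = sqrt 3"
    using assms(1) unfolding is_unit_rhombus_def by auto
  have aa: "a \<bullet> a = 1" using r(1) unfolding dist1_iff a_def by simp
  have cc: "c \<bullet> c = 1" using r(2) unfolding dist1_iff c_def by (simp add: inner_commute inner_diff)
  have dd: "d \<bullet> d = 3" using r(6) unfolding dist1_iff d_def by (simp add: inner_commute inner_diff)
  have ac0: "(a - c) \<bullet> (a - c) = 1/4" using r(5) unfolding dist1_iff a_def c_def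
    by (simp add: power2_eq_square)
  have cd0: "(c - d) \<bullet> (c - d) = 1" using r(3) unfolding dist1_iff c_def d_def by simp
  have da0: "(d - a) \<bullet> (d - a) = 1" using r(4) unfolding dist1_iff d_def a_def by simp
  have ac: "a \<bullet> c = 7/8" using ac0 aa cc by (simp add: inner_diff inner_commute)
  have cd: "c \<bullet> d = 3/2" using cd0 cc dd by (simp add: inner_diff inner_commute)
  have da: "d \<bullet> a = 3/2" using da0 dd aa by (simp add: inner_diff inner_commute)
  have A: "A' = v2 + 2 *\<^sub>R a" unfolding A'_def a_def by (simp add: vec_eq_iff algebra_simps)
  have C: "C' = v2 + 2 *\<^sub>R c" unfolding C'_def c_def by (simp add: vec_eq_iff algebra_simps)
  have v1: "v1 = v2 + a" and v3: "v3 = v2 + c" and v4: "v4 = v2 + d" by (simp_all add: a_def c_def d_def)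
  show "dist v4 A' = 1" unfolding dist1_iff A v4
    using aa da dd by (simp add: inner_diff inner_commute algebra_simps)
  show "dist v1 A' = 1" unfolding dist1_iff A v1
    using aa by (simp add: inner_diff inner_commute algebra_simps)
  show "dist v4 C' = 1" unfolding dist1_iff C v4
    using cc cd dd by (simp add: inner_diff inner_commute algebra_simps)
  show "dist A' C' = 1" unfolding dist1_iff A C
    using aa cc ac by (simp add: inner_diff inner_commute algebra_simps)
  show "dist v3 C' = 1" unfolding dist1_iff C v3
    using cc by (simp add: inner_diff inner_commute algebra_simps)
  show "dist v4 v1 = 1" "dist v3 v4 = 1" using r by auto
  show "dist A' v2 = 2" unfolding dist1_iff A
    using aa by (simp add: inner_diff inner_commute algebra_simps)
  show "dist v2 C' = 2" unfolding dist1_iff C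
    using cc by (simp add: inner_diff inner_commute algebra_simps)
  show "midpoint A' v2 = v1" "midpoint v2 C' = v3" unfolding A'_def C'_def midpoint_def
    by (simp_all add: vec_eq_iff)
qed



theorem proposition5p2:
  fixes A B C v1 v2 v3 v4 :: "real^3"
  assumes "dist A B = 2" and "dist B C = 2" and "dist C A = 1"
    and "is_unit_rhombus (1/2) (sqrt 3) v1 v2 v3 v4"
  shows "can_be_domed (tri_221_polygon A B C) \<longleftrightarrow> can_be_domed [v1, v2, v3, v4]"
proof -
  define A' where "A' = 2 *\<^sub>R v1 - v2"
  define C' where "C' = 2 *\<^sub>R v3 - v2"
  note R = rhombus_facts[OF assms(4), folded A'_def C'_def]
  have tri': "tri_221_polygon A' v2 C' = [A', v1, v2, v3, C']"
    unfolding tri_221_polygon_def using R(10,11) by simp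
  have dAC: "dist A C = 1" using assms(3) by (simp add: dist_commute)
  obtain g where g: "\<And>x y. dist (g x) (g y) = dist x y" "g A = A'" "g B = v2" "g C = C'"
    "\<And>x y. g (midpoint x y) = midpoint (g x) (g y)"
    using cong3[of A B A' v2 C C'] assms(1,2) dAC R(8,9,4) by auto
  obtain h where h: "\<And>x y. dist (h x) (h y) = dist x y" "h A' = A" "h v2 = B" "h C' = C"
    "\<And>x y. h (midpoint x y) = midpoint (h x) (h y)"
    using cong3[of A' v2 A B C' C] assms(1,2) dAC R(8,9,4) by auto
  have mg: "map g (tri_221_polygon A B C) = tri_221_polygon A' v2 C'"
    unfolding tri_221_polygon_def using g by simp
  have mh: "map h (tri_221_polygon A' v2 C') = tri_221_polygon A B C"
    unfolding tri_221_polygon_def using h by simp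
  show ?thesis
  proof
    assume "can_be_domed (tri_221_polygon A B C)"
    then have "can_be_domed [A', v1, v2, v3, C']" using transfer[of _ g] g(1) mg tri' by metis
    then show "can_be_domed [v1, v2, v3, v4]"
      by (rule L2) (use R in \<open>auto simp: dist_commute\<close>)
  next
    assume "can_be_domed [v1, v2, v3, v4]"
    then have "can_be_domed [A', v1, v2, v3, C']" by (rule L1) (use R in auto)
    then show "can_be_domed (tri_221_polygon A B C)" using transfer[of _ h] h(1) mh tri' by metis
  qed
qed


end
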